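(* Let $0<r'<r<1$. The map of condensed abelian groups $\theta_{r'}:\mathbb{Z}((T))_r\to\underline{\mathbb{R}}$, $\sum a_nT^n\mapsto\big(s\mapsto\sum a_n(s)(r')^n\big)$, is an epimorphism; i.e. for every extremally disconnected set $S$ the map $\mathbb{Z}((T))_r(S)\to C(S,\mathbb{R})$ is surjective.
   Context: Extremally disconnected sets are the projective objects in the category of compact Hausdorff spaces. For $0<r<1$ and extremally disconnected $S$, $\mathbb{Z}((T))_r(S)$ is the ring of formal sums $\sum_{n\ge k}a_nT^n$ (some $k\in\mathbb{Z}$) with $a_n\in C(S,\mathbb{Z})$ such that there is $c>0$ with $\sum_n|a_n(s)|r^n\le c$ for all $s\in S$; this defines a condensed ring $\mathbb{Z}((T))_r$. $\underline{\mathbb{R}}$ is $S\mapsto C(S,\mathbb{R})$. *)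

theory Defs
  imports "HOL-Analysis.Analysis"
begin

definition extremally_disconnected :: "'a topology \<Rightarrow> bool" where
  "extremally_disconnected X \<longleftrightarrow>
     compact_space X \<and> Hausdorff_space X \<and>
     (\<forall>U. openin X U \<longrightarrow> openin X (X closure_of U))"

text \<open>Sections of the condensed ring Z((T))_r over S: families of coefficients
a n \<in> C(S,Z) (n \<in> Z), vanishing for n below some k, with
sum_n |a_n(s)| r^n bounded uniformly in s.  Coefficient functions are only
relevant on topspace S.\<close>
definition laurent_r :: "'a topology \<Rightarrow> real \<Rightarrow> (int \<Rightarrow> 'a \<Rightarrow> int) set" where
  "laurent_r S r = {a.
     (\<forall>n. continuous_map S euclidean (a n)) \<and>
     (\<exists>k. \<forall>n<k. \<forall>s\<in>topspace S. a n s = 0) \<and>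
     (\<exists>c>0. \<forall>s\<in>topspace S.
        (\<lambda>n. real_of_int \<bar>a n s\<bar> * r powi n) summable_on UNIV \<and>
        (\<Sum>\<^sub>\<infinity>n. real_of_int \<bar>a n s\<bar> * r powi n) \<le> c)}"

definition theta :: "real \<Rightarrow> (int \<Rightarrow> 'a \<Rightarrow> int) \<Rightarrow> 'a \<Rightarrow> real" where
  "theta r' a s = (\<Sum>\<^sub>\<infinity>n. real_of_int (a n s) * r' powi n)"

end

theory Submission
  imports Defs
begin

definition clo :: "'a topology \<Rightarrow> ('a \<Rightarrow> real) \<Rightarrow> int \<Rightarrow> 'a set" where
  "clo S g m = S closure_of {x\<in>topspace S. g x < of_int m}"

definition rnd :: "'a topology \<Rightarrow> int \<Rightarrow> ('a \<Rightarrow> real) \<Rightarrow> 'a \<Rightarrow> int" where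
  "rnd S M g s = - M + int (card {m\<in>{-M..<M}. s \<notin> clo S g m})"

lemma clo_clopen:
  assumes ed: "extremally_disconnected S" and g: "continuous_map S euclidean g"
  shows "openin S (clo S g m)" "closedin S (clo S g m)"
proof -
  have "openin S {x\<in>topspace S. g x \<in> {..<of_int m}}"
    by (rule openin_continuous_map_preimage[OF g]) auto
  then show "openin S (clo S g m)" using ed unfolding extremally_disconnected_def clo_def
    by simp
  show "closedin S (clo S g m)" unfolding clo_def by simp
qed

lemma clo_upper:
  assumes g: "continuous_map S euclidean g" and s: "s \<in> clo S g m"
  shows "g s \<le> of_int m"
proof -
  have c: "closedin S {x\<in>topspace S. g x \<in> {..of_int m}}"
    by (rule closedin_continuous_map_preimage[OF g]) auto
  have "clo S g m \<subseteq> {x\<in>topspace S. g x \<in> {..of_int m}}"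
    unfolding clo_def by (rule closure_of_minimal[OF _ c]) auto
  with s show ?thesis by auto
qed

lemma clo_lower:
  assumes s: "s \<in> topspace S" "g s < of_int m"
  shows "s \<in> clo S g m"
  using s closure_of_subset[of "{x\<in>topspace S. g x < of_int m}" S] unfolding clo_def by auto

lemma rnd_bounds:
  assumes g: "continuous_map S euclidean g" and s: "s \<in> topspace S"
    and M: "\<bar>g s\<bar> < of_int M"
  shows "g s \<le> of_int (rnd S M g s)" "of_int (rnd S M g s) \<le> g s + 1"
proof -
  let ?A = "{m\<in>{-M..<M}. s \<notin> clo S g m}"
  have fin: "finite ?A" by (rule finite_subset[of _ "{-M..<M}"]) auto
  have "{-M..<ceiling (g s)} \<subseteq> ?A"
  proof
    fix m assume m: "m \<in> {-M..<ceiling (g s)}"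
    then have "of_int m < g s" by (simp add: less_ceiling_iff)
    moreover have "m < M" using m M by (simp add: ceiling_less_iff) linarith
    ultimately show "m \<in> ?A" using m clo_upper[OF g, of s m] by force
  qed
  from card_mono[OF fin this] have "nat (ceiling (g s) + M) \<le> card ?A" by simp
  then have "ceiling (g s) \<le> rnd S M g s" unfolding rnd_def using M by linarith
  then show "g s \<le> of_int (rnd S M g s)" by linarith
  have "?A \<subseteq> {-M..floor (g s)}"
  proof
    fix m assume m: "m \<in> ?A"
    then have "\<not> g s < of_int m" using clo_lower[OF s] by blast
    then show "m \<in> {-M..floor (g s)}" using m by (simp add: le_floor_iff)
  qed
  from card_mono[OF _ this] have "card ?A \<le> nat (floor (g s) + M + 1)" by simp
  moreover have "-M \<le> floor (g s)" using M by (simp add: le_floor_iff)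
  ultimately have "int (card ?A) \<le> floor (g s) + M + 1" by linarith
  then have "rnd S M g s \<le> floor (g s) + 1" unfolding rnd_def by linarith
  then show "of_int (rnd S M g s) \<le> g s + 1" by linarith
qed


lemma rnd_lc:
  assumes ed: "extremally_disconnected S" and g: "continuous_map S euclidean g"
  shows "openin S {x \<in> topspace S. rnd S M g x \<in> U}"
  proof (rule openin_subopen[THEN iffD2], rule ballI)
    fix s assume s: "s \<in> {x \<in> topspace S. rnd S M g x \<in> U}"
    define T where "T = \<Inter> (insert (topspace S) ((\<lambda>m. if s \<in> clo S g m then clo S g m
       else topspace S - clo S g m) ` {-M..<M}))"
    have "openin S T" unfolding T_def
      using clo_clopen[OF ed g] by (intro openin_Inter) auto
    moreover have "s \<in> T" using s unfolding T_def by auto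
    moreover have "T \<subseteq> {x \<in> topspace S. rnd S M g x \<in> U}"
    proof
      fix t assume t: "t \<in> T"
      then have tt: "t \<in> topspace S" unfolding T_def by auto
      have "(t \<in> clo S g m) = (s \<in> clo S g m)" if m: "m \<in> {-M..<M}" for m
      proof -
        have "t \<in> (if s \<in> clo S g m then clo S g m else topspace S - clo S g m)"
          using t m unfolding T_def by blast
        then show ?thesis by (cases "s \<in> clo S g m") auto
      qed
      then have "{m\<in>{-M..<M}. t \<notin> clo S g m} = {m\<in>{-M..<M}. s \<notin> clo S g m}" by blast
      then have "rnd S M g t = rnd S M g s" unfolding rnd_def by simp
      then show "t \<in> {x \<in> topspace S. rnd S M g x \<in> U}" using s tt by simp
    qed
    ultimately show "\<exists>T. openin S T \<and> s \<in> T \<and> T \<subseteq> {x \<in> topspace S. rnd S M g x \<in> U}"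
      by blast
  qed

lemma rnd_cont:
  assumes ed: "extremally_disconnected S" and g: "continuous_map S euclidean g"
  shows "continuous_map S euclidean (rnd S M g)"
    "continuous_map S euclidean (\<lambda>x. real_of_int (rnd S M g x))"
proof -
  show "continuous_map S euclidean (rnd S M g)"
    using rnd_lc[OF ed g] by (simp add: continuous_map_def)
  have "openin S {x \<in> topspace S. real_of_int (rnd S M g x) \<in> U}" for U
    using rnd_lc[OF ed g, of M "of_int -` U"] by simp
  then show "continuous_map S euclidean (\<lambda>x. real_of_int (rnd S M g x))"
    by (simp add: continuous_map_def)
qed

lemma cont_bounded:
  assumes "compact_space S" "continuous_map S euclidean (g :: 'a \<Rightarrow> real)"
  shows "\<exists>B. \<forall>s\<in>topspace S. \<bar>g s\<bar> \<le> B"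
proof -
  have "compactin euclidean (g ` topspace S)"
    using assms image_compactin compact_space_def by blast
  then have "bounded (g ` topspace S)" by (simp add: compact_imp_bounded)
  then show ?thesis unfolding bounded_real by blast
qed

definition bnd :: "'a topology \<Rightarrow> ('a \<Rightarrow> real) \<Rightarrow> int" where
  "bnd S g = (SOME M. \<forall>s\<in>topspace S. \<bar>g s\<bar> < of_int M)"

lemma bnd_ok:
  assumes "compact_space S" "continuous_map S euclidean (g :: 'a \<Rightarrow> real)"
  shows "\<forall>s\<in>topspace S. \<bar>g s\<bar> < of_int (bnd S g)"
proof -
  obtain B where B: "\<forall>s\<in>topspace S. \<bar>g s\<bar> \<le> B" using cont_bounded[OF assms] by blast
  have "\<forall>s\<in>topspace S. \<bar>g s\<bar> < of_int (ceiling B + 1)"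
  proof
    fix s assume "s \<in> topspace S"
    then have "\<bar>g s\<bar> \<le> B" using B by blast
    moreover have "B \<le> of_int (ceiling B)" by (rule le_of_int_ceiling)
    ultimately show "\<bar>g s\<bar> < of_int (ceiling B + 1)" by linarith
  qed
  then show ?thesis unfolding bnd_def by (rule someI)
qed

definition R :: "'a topology \<Rightarrow> ('a \<Rightarrow> real) \<Rightarrow> 'a \<Rightarrow> int" where
  "R S g = rnd S (bnd S g) g"

primrec hseq :: "'a topology \<Rightarrow> real \<Rightarrow> ('a \<Rightarrow> real) \<Rightarrow> nat \<Rightarrow> 'a \<Rightarrow> real" where
  "hseq S q f 0 = f"
| "hseq S q f (Suc n) = (\<lambda>s. (hseq S q f n s - of_int (R S (hseq S q f n) s)) / q)"

lemma int_has_sum: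
  fixes F :: "int \<Rightarrow> real"
  assumes "\<And>n. n < 0 \<Longrightarrow> F n = 0" "summable (\<lambda>k. norm (F (int k)))" "(\<lambda>k. F (int k)) sums L"
  shows "(F has_sum L) UNIV"
proof -
  have "((F \<circ> int) has_sum L) UNIV"
    using norm_summable_imp_has_sum[of "\<lambda>k. F (int k)"] assms by (simp add: o_def)
  then have "(F has_sum L) (range int)" by (simp add: has_sum_reindex)
  moreover have z: "\<And>x. x \<notin> range int \<Longrightarrow> F x = 0"
    by (metis assms(1) not_less nonneg_int_cases rangeI)
  ultimately show ?thesis
    using has_sum_cong_neutral[of "range int" UNIV F F L] by auto
qed


theorem mainTheorem16:
  fixes S :: "'a topology" and r r' :: real
  assumes "0 < r'" and "r' < r" and "r < 1"
    and "extremally_disconnected S"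
  shows "\<forall>f :: 'a \<Rightarrow> real. continuous_map S euclidean f \<longrightarrow>
           (\<exists>a\<in>laurent_r S r. \<forall>s\<in>topspace S. theta r' a s = f s)"
proof (intro allI impI)
  fix f :: "'a \<Rightarrow> real"
  assume fc: "continuous_map S euclidean f"
  note ed = assms(4)
  have cs: "compact_space S" using ed unfolding extremally_disconnected_def by blast
  have r'1: "r' < 1" and r0: "0 < r" using assms by auto
  define h where "h = hseq S r' f"
  define A where "A n s = R S (h n) s" for n s
  have hc: "continuous_map S euclidean (h n)" for n
  proof (induction n)
    case 0 then show ?case using fc by (simp add: h_def)
  next
    case (Suc n)
    have "continuous_map S euclidean (\<lambda>x. (1/r') * (h n x - of_int (R S (h n) x)))"
      using Suc rnd_cont(2)[OF ed Suc] unfolding R_def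
      by (intro continuous_map_real_mult_left continuous_map_diff) auto
    then show ?case by (simp add: h_def R_def)
  qed
  have Abd: "h n s \<le> of_int (A n s)" "of_int (A n s) \<le> h n s + 1" if "s \<in> topspace S" for n s
    using rnd_bounds[OF hc[of n] that, where M="bnd S (h n)"] bnd_ok[OF cs hc[of n]] that
    unfolding A_def R_def by auto
  have hsuc: "h (Suc n) s = (h n s - of_int (A n s)) / r'" for n s
    by (simp add: h_def A_def)
  obtain B0 where B0: "\<forall>s\<in>topspace S. \<bar>f s\<bar> \<le> B0" using cont_bounded[OF cs fc] by blast
  define B where "B = max B0 (1/r')"
  have Bpos: "B > 0" using assms(1) unfolding B_def by (simp add: less_max_iff_disj)
  have hb: "\<bar>h n s\<bar> \<le> B" if s: "s \<in> topspace S" for n s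
  proof (cases n)
    case 0 then show ?thesis using B0 s unfolding h_def B_def by (simp add: le_max_iff_disj)
  next
    case (Suc m)
    have "\<bar>h m s - of_int (A m s)\<bar> \<le> 1" using Abd[OF s, of m] by linarith
    then have "\<bar>h m s - of_int (A m s)\<bar> / r' \<le> 1 / r'"
      using assms(1) by (simp add: divide_right_mono)
    moreover have "\<bar>h (Suc m) s\<bar> = \<bar>h m s - of_int (A m s)\<bar> / r'"
      by (simp only: hsuc[of m s] abs_divide abs_of_pos[OF assms(1)])
    moreover have "1 / r' \<le> B" unfolding B_def by (rule max.cobounded2)
    ultimately show ?thesis unfolding Suc by linarith
  qed
  have Ab: "\<bar>of_int (A n s)\<bar> \<le> B + 1" if s: "s \<in> topspace S" for n s
    using Abd[OF s, of n] hb[OF s, of n] by linarith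
  have tel: "f s = (\<Sum>k<N. of_int (A k s) * r'^k) + h N s * r'^N" for N s
  proof (induction N)
    case 0 then show ?case by (simp add: h_def)
  next
    case (Suc N)
    have E: "h (Suc N) s * r' = h N s - of_int (A N s)" using hsuc[of N s] assms(1) by simp
    have "of_int (A N s) * r'^N + h (Suc N) s * r'^(Suc N)
        = of_int (A N s) * r'^N + (h (Suc N) s * r') * r'^N" by (simp add: algebra_simps)
    also have "\<dots> = h N s * r'^N" unfolding E by (simp add: algebra_simps)
    finally have "h N s * r'^N = of_int (A N s) * r'^N + h (Suc N) s * r'^(Suc N)" by simp
    then show ?case using Suc by simp
  qed
  have sm: "(\<lambda>k. of_int (A k s) * r'^k) sums f s" if s: "s \<in> topspace S" for s
  proof -
    have "(\<lambda>N. B * r'^N) \<longlonglongrightarrow> 0"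
      using assms(1) r'1 by (intro tendsto_mult_right_zero LIMSEQ_power_zero) auto
    moreover have "norm (h N s * r'^N) \<le> B * r'^N" for N
    proof -
      have "\<bar>h N s\<bar> * r'^N \<le> B * r'^N"
        by (rule mult_right_mono[OF hb[OF s]]) (use assms(1) in simp)
      moreover have "norm (h N s * r'^N) = \<bar>h N s\<bar> * r'^N"
        using assms(1) by (simp add: abs_mult)
      ultimately show ?thesis by linarith
    qed
    ultimately have "(\<lambda>N. h N s * r'^N) \<longlonglongrightarrow> 0"
      by (intro Lim_null_comparison[of "\<lambda>N. h N s * r'^N" "\<lambda>N. B * r'^N"] always_eventually allI)
    then have "(\<lambda>N. f s - h N s * r'^N) \<longlonglongrightarrow> f s - 0"
      by (intro tendsto_diff) auto
    moreover have "(\<lambda>N. f s - h N s * r'^N) = (\<lambda>N. \<Sum>k<N. of_int (A k s) * r'^k)"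
    proof
      fix N show "f s - h N s * r'^N = (\<Sum>k<N. of_int (A k s) * r'^k)"
        using tel[of s N] by linarith
    qed
    ultimately show ?thesis unfolding sums_def by simp
  qed
  have geo: "(\<lambda>k. (B + 1) * q^k) sums ((B + 1) / (1 - q))" if "0 < q" "q < 1" for q :: real
    using sums_mult[OF geometric_sums[of q], of "B+1"] that by (simp add: field_simps)
  have nsm: "summable (\<lambda>k. norm (of_int (A k s) * q^k))"
    if s: "s \<in> topspace S" and q: "0 < q" "q < 1" for s and q :: real
  proof (rule summable_comparison_test'[of "\<lambda>k. (B + 1) * q^k"])
    show "summable (\<lambda>k. (B + 1) * q^k)" using geo[OF q] by (rule sums_summable)
    fix k :: nat
    show "norm (norm (of_int (A k s) * q^k)) \<le> (B + 1) * q^k"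
    proof -
      have "\<bar>of_int (A k s)\<bar> * q^k \<le> (B + 1) * q^k"
        by (rule mult_right_mono[OF Ab[OF s]]) (use q in simp)
      moreover have "norm (norm (of_int (A k s) * q^k)) = \<bar>of_int (A k s)\<bar> * q^k"
        using q by (simp add: abs_mult)
      ultimately show ?thesis by simp
    qed
  qed
  define a where "a n s = (if n < 0 then 0 else A (nat n) s)" for n :: int and s
  have "a \<in> laurent_r S r"
    unfolding laurent_r_def
  proof (intro CollectI conjI allI)
    fix n
    show "continuous_map S euclidean (a n)"
    proof (cases "n < 0")
      case True
      then have "a n = (\<lambda>s. 0)" by (intro ext) (simp add: a_def)
      then show ?thesis by simp
    next
      case False
      then have "a n = rnd S (bnd S (h (nat n))) (h (nat n))"
        by (intro ext) (simp add: a_def A_def R_def)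
      then show ?thesis using rnd_cont(1)[OF ed hc] by simp
    qed
  next
    show "\<exists>k. \<forall>n<k. \<forall>s\<in>topspace S. a n s = 0"
      by (rule exI[of _ 0]) (simp add: a_def)
  next
    show "\<exists>c>0. \<forall>s\<in>topspace S. (\<lambda>n. real_of_int \<bar>a n s\<bar> * r powi n) summable_on UNIV \<and>
        (\<Sum>\<^sub>\<infinity>n. real_of_int \<bar>a n s\<bar> * r powi n) \<le> c"
    proof (intro exI[of _ "(B + 1) / (1 - r) + 1"] conjI ballI)
      show "(B + 1) / (1 - r) + 1 > 0" using Bpos assms(3) by (simp add: add_pos_pos)
      fix s assume s: "s \<in> topspace S"
      have ns: "summable (\<lambda>k. norm (real_of_int \<bar>a (int k) s\<bar> * r powi (int k)))"
        using nsm[OF s r0 assms(3)] by (simp add: a_def abs_mult)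
      have hs: "((\<lambda>n. real_of_int \<bar>a n s\<bar> * r powi n) has_sum
          (\<Sum>k. real_of_int \<bar>a (int k) s\<bar> * r powi (int k))) UNIV"
      proof (rule int_has_sum)
        show "summable (\<lambda>k. norm (real_of_int \<bar>a (int k) s\<bar> * r powi (int k)))" by (rule ns)
        show "(\<lambda>k. real_of_int \<bar>a (int k) s\<bar> * r powi (int k)) sums
          (\<Sum>k. real_of_int \<bar>a (int k) s\<bar> * r powi (int k))"
          using summable_norm_cancel[OF ns] by (rule summable_sums)
      qed (simp add: a_def)
      then show "(\<lambda>n. real_of_int \<bar>a n s\<bar> * r powi n) summable_on UNIV"
        by (simp add: has_sum_imp_summable)
      have "(\<Sum>\<^sub>\<infinity>n. real_of_int \<bar>a n s\<bar> * r powi n) =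
          (\<Sum>k. real_of_int \<bar>a (int k) s\<bar> * r powi (int k))"
        using hs by (rule infsumI)
      also have "\<dots> \<le> (\<Sum>k. (B + 1) * r^k)"
      proof (rule suminf_le)
        show "summable (\<lambda>k. real_of_int \<bar>a (int k) s\<bar> * r powi (int k))"
          using summable_norm_cancel[OF ns] .
        show "summable (\<lambda>k. (B + 1) * r^k)" using geo[OF r0 assms(3)] by (rule sums_summable)
        fix k :: nat
        show "real_of_int \<bar>a (int k) s\<bar> * r powi (int k) \<le> (B + 1) * r^k"
        proof -
          have e: "real_of_int \<bar>a (int k) s\<bar> * r powi (int k) = \<bar>of_int (A k s)\<bar> * r^k"
            by (simp add: a_def)
          show ?thesis unfolding e
            using mult_right_mono[OF Ab[OF s, of k], of "r^k"] r0 by simp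
        qed
      qed
      also have "\<dots> = (B + 1) / (1 - r)" using geo[OF r0 assms(3)] by (simp add: sums_iff)
      finally show "(\<Sum>\<^sub>\<infinity>n. real_of_int \<bar>a n s\<bar> * r powi n) \<le> (B + 1) / (1 - r) + 1"
        by simp
    qed
  qed
  moreover have "theta r' a s = f s" if s: "s \<in> topspace S" for s
  proof -
    have "((\<lambda>n. real_of_int (a n s) * r' powi n) has_sum f s) UNIV"
    proof (rule int_has_sum)
      have e: "real_of_int (a (int k) s) * r' powi (int k) = of_int (A k s) * r'^k" for k
        by (simp add: a_def)
      show "summable (\<lambda>k. norm (real_of_int (a (int k) s) * r' powi (int k)))"
        unfolding e by (rule nsm[OF s assms(1) r'1])
      show "(\<lambda>k. real_of_int (a (int k) s) * r' powi (int k)) sums f s"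
        unfolding e by (rule sm[OF s])
    qed (simp add: a_def)
    then show ?thesis unfolding theta_def by (rule infsumI)
  qed
  ultimately show "\<exists>a\<in>laurent_r S r. \<forall>s\<in>topspace S. theta r' a s = f s" by blast
qed

end
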